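(* Let $\bm{\mu}\in\mathbb{R}^d$, let $\bm{\Sigma}$ be a positive definite $d\times d$ matrix, let $t\in\mathbb{R}$ and $\bm{w}\in\mathbb{R}^d$ with $\bm{w}\ne\bm{0}$. Let $\mathcal{M}_S(\bm{\mu},\bm{\Sigma})$ be the set of symmetric probability distributions $G$ on $\mathbb{R}^d$ of a random vector $\bm{X}$ with $\mathbb{E}^G[\bm{X}]=\bm{\mu}$ and $\mathrm{Cov}^G[\bm{X}]=\bm{\Sigma}$, and let $\mathcal{L}_{\bm{w},S}(\bm{\mu},\bm{\Sigma})$ be the set of distributions of $\bm{w}^\top\bm{X}$ as the distribution of $\bm{X}$ ranges over $\mathcal{M}_S(\bm{\mu},\bm{\Sigma})$. Then \[ \mathcal{L}_{\bm{w},S}(\bm{\mu},\bm{\Sigma})=\mathcal{L}_S\big(\bm{w}^\top\bm{\mu},\sqrt{\bm{w}^\top\bm{\Sigma}\bm{w}}\big) \] and \[ \sup_{G\in\mathcal{M}_S(\bm{\mu},\bm{\Sigma})}\mathbb{E}^G[(\bm{w}^\top\bm{X}-t)_+^2]=\sup_{F\in\mathcal{L}_S(\bm{w}^\top\bm{\mu},\sqrt{\bm{w}^\top\bm{\Sigma}\bm{w}})}\mathbb{E}^F[(X-t)_+^2]. \]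
   Context: For $x\in\mathbb{R}$, $(x)_+=\max\{x,0\}$. For $a\in\mathbb{R}$, $s>0$, $\mathcal{L}_S(a,s)$ is the set of symmetric probability distributions $F$ on $\mathbb{R}$ with $\mathbb{E}^F[X]=a$ and $\mathbb{E}^F[X^2]=a^2+s^2$; a distribution of a real random variable $X$ is symmetric if there is $b\in\mathbb{R}$ with $\mathbb{P}(X-b>x)=\mathbb{P}(X-b<-x)$ for all $x$. A distribution $G$ of $\bm{X}\in\mathbb{R}^d$ is symmetric if there is $\bm{a}\in\mathbb{R}^d$ with $\mathbb{P}(\bm{X}-\bm{a}\in B)=\mathbb{P}(\bm{X}-\bm{a}\in -B)$ for all Borel $B\subseteq\mathbb{R}^d$, where $-B=\{\bm{x}:-\bm{x}\in B\}$. *)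

theory Defs
  imports "HOL-Probability.Probability"
begin

definition pos_part :: "real \<Rightarrow> real" where
  "pos_part x = max x 0"

definition sym_dist_real :: "real measure \<Rightarrow> bool" where
  "sym_dist_real F \<longleftrightarrow>
     (\<exists>b. \<forall>x. measure F {y. y - b > x} = measure F {y. y - b < - x})"

definition L_S :: "real \<Rightarrow> real \<Rightarrow> real measure set" where
  "L_S a s = {F. prob_space F \<and> sets F = sets (borel :: real measure) \<and> sym_dist_real F
     \<and> integrable F (\<lambda>x. x) \<and> integrable F (\<lambda>x. x ^ 2)
     \<and> (\<integral>x. x \<partial>F) = a \<and> (\<integral>x. x ^ 2 \<partial>F) = a ^ 2 + s ^ 2}"

definition sym_dist_vec :: "(real ^ 'n) measure \<Rightarrow> bool" where
  "sym_dist_vec G \<longleftrightarrow>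
     (\<exists>a. \<forall>B \<in> sets (borel :: (real ^ 'n) measure).
        measure G {x. x - a \<in> B} = measure G {x. x - a \<in> uminus ` B})"

definition pos_def_mat :: "real ^ 'n ^ 'n \<Rightarrow> bool" where
  "pos_def_mat S \<longleftrightarrow> transpose S = S \<and> (\<forall>v. v \<noteq> 0 \<longrightarrow> v \<bullet> (S *v v) > 0)"

definition M_S :: "real ^ 'n \<Rightarrow> real ^ 'n ^ 'n \<Rightarrow> (real ^ 'n) measure set" where
  "M_S mu S = {G. prob_space G \<and> sets G = sets (borel :: (real ^ 'n) measure) \<and> sym_dist_vec G
     \<and> (\<forall>i. integrable G (\<lambda>x. x $ i)) \<and> (\<forall>i. integrable G (\<lambda>x. (x $ i) ^ 2))
     \<and> (\<forall>i. (\<integral>x. x $ i \<partial>G) = mu $ i)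
     \<and> (\<forall>i j. (\<integral>x. (x $ i - mu $ i) * (x $ j - mu $ j) \<partial>G) = S $ i $ j)}"

definition L_wS :: "real ^ 'n \<Rightarrow> real ^ 'n \<Rightarrow> real ^ 'n ^ 'n \<Rightarrow> real measure set" where
  "L_wS w mu S = (\<lambda>G. distr G borel (\<lambda>x. w \<bullet> x)) ` M_S mu S"

end

theory Submission
  imports Defs
begin

definition qf :: "('n::finite \<Rightarrow> 'n \<Rightarrow> real) \<Rightarrow> ('n \<Rightarrow> real) \<Rightarrow> ('n \<Rightarrow> real) \<Rightarrow> real" where
  "qf C x y = (\<Sum>a\<in>UNIV. \<Sum>b\<in>UNIV. x a * C a b * y b)"

lemma qf_add:
  "qf C (\<lambda>a. x a + t * y a) (\<lambda>a. x a + t * y a) = qf C x x + t * (qf C x y + qf C y x) + t^2 * qf C y y"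
  unfolding qf_def
  by (simp add: algebra_simps power2_eq_square sum.distrib sum_distrib_left)

lemma qf_sym: "(\<And>i j. C i j = C j i) \<Longrightarrow> qf C x y = qf C y x"
  unfolding qf_def by (subst sum.swap) (simp add: mult.commute mult.left_commute)

definition dl :: "'n \<Rightarrow> 'n \<Rightarrow> real" where "dl i = (\<lambda>a. if a = i then 1 else 0)"

lemma dl_sum_left: fixes i :: "'n::finite" shows "(\<Sum>a\<in>UNIV. dl i a * g a) = g i"
proof -
  have "(\<Sum>a\<in>UNIV. dl i a * g a) = (\<Sum>a\<in>UNIV. if a = i then g a else 0)"
    by (rule sum.cong) (auto simp: dl_def)
  also have "\<dots> = g i" by simp
  finally show ?thesis .
qed

lemma dl_sum_right: fixes i :: "'n::finite" shows "(\<Sum>a\<in>UNIV. g a * dl i a) = g i"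
  using dl_sum_left[of i g] by (simp add: mult.commute)

lemma qf_dl_left: "qf C (dl i) y = (\<Sum>b\<in>UNIV. C i b * y b)"
proof -
  have "qf C (dl i) y = (\<Sum>a\<in>UNIV. dl i a * (\<Sum>b\<in>UNIV. C a b * y b))"
    unfolding qf_def by (simp add: sum_distrib_left mult.assoc)
  then show ?thesis by (simp add: dl_sum_left)
qed

lemma qf_dl_right: "qf C x (dl i) = (\<Sum>a\<in>UNIV. x a * C a i)"
proof -
  have "qf C x (dl i) = (\<Sum>a\<in>UNIV. x a * (\<Sum>b\<in>UNIV. C a b * dl i b))"
    unfolding qf_def by (simp add: sum_distrib_left mult.assoc)
  then show ?thesis by (simp add: dl_sum_right)
qed

lemma qf_dl_dl: "qf C (dl i) (dl j) = C i j"
  unfolding qf_dl_left by (simp add: dl_sum_right)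

lemma lin_nonneg_zero:
  fixes a b :: real
  assumes "\<And>t. a + t * b \<ge> 0" shows "b = 0"
proof (rule ccontr)
  assume "b \<noteq> 0"
  have "a + (-(\<bar>a\<bar>+1)/b) * b \<ge> 0" by (rule assms)
  moreover have "(-(\<bar>a\<bar>+1)/b) * b = -(\<bar>a\<bar>+1)" using \<open>b \<noteq> 0\<close> by simp
  ultimately show False by linarith
qed

lemma psd_zero_diag:
  assumes sym: "\<And>i j. C i j = C j i" and psd: "\<And>x. qf C x x \<ge> 0" and z: "C i i = 0"
  shows "C i j = 0"
proof -
  have "\<And>t. qf C (dl j) (dl j) + t * (2 * C i j) \<ge> 0"
  proof -
    fix t
    have "qf C (\<lambda>a. dl j a + t * dl i a) (\<lambda>a. dl j a + t * dl i a) \<ge> 0" by (rule psd)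
    also have "qf C (\<lambda>a. dl j a + t * dl i a) (\<lambda>a. dl j a + t * dl i a) = qf C (dl j) (dl j) + t * (2 * C i j)"
      by (simp add: qf_add qf_dl_dl z sym[of j i])
    finally show "qf C (dl j) (dl j) + t * (2 * C i j) \<ge> 0" .
  qed
  from lin_nonneg_zero[OF this] show ?thesis by simp
qed

lemma psd_factor_aux:
  fixes C :: "'n::finite \<Rightarrow> 'n \<Rightarrow> real"
  shows "card {i. \<exists>j. C i j \<noteq> 0} = n \<Longrightarrow> (\<And>i j. C i j = C j i) \<Longrightarrow> (\<And>x. qf C x x \<ge> 0) \<Longrightarrow>
    \<exists>v::'n \<Rightarrow> 'n \<Rightarrow> real. (\<forall>i j. C i j = (\<Sum>k\<in>UNIV. v k i * v k j)) \<and> (\<forall>k. (\<forall>j. C k j = 0) \<longrightarrow> v k = (\<lambda>_. 0))"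
proof (induction n arbitrary: C rule: less_induct)
  case (less n)
  note sym = less.prems(2) and psd = less.prems(3)
  show ?case
  proof (cases "\<exists>i j. C i j \<noteq> 0")
    case False
    then show ?thesis by (intro exI[of _ "\<lambda>_ _. 0"]) auto
  next
    case True
    then obtain i j where ij: "C i j \<noteq> 0" by blast
    have cii: "C i i > 0"
    proof -
      have "C i i \<noteq> 0" using psd_zero_diag[of C i j, OF sym psd] ij by blast
      moreover have "C i i \<ge> 0" using psd[of "dl i"] by (simp add: qf_dl_dl)
      ultimately show ?thesis by simp
    qed
    define c where "c = (\<lambda>a. C i a)"
    define C' where "C' = (\<lambda>a b. C a b - c a * c b / C i i)"
    have sym': "\<And>a b. C' a b = C' b a" unfolding C'_def using sym by (simp add: mult.commute)
    have qfC': "qf C' x x = qf C x x - (\<Sum>a\<in>UNIV. x a * c a)^2 / C i i" for x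
    proof -
      have "qf C' x x = qf C x x - (\<Sum>a\<in>UNIV. \<Sum>b\<in>UNIV. (x a * c a) * (x b * c b) / C i i)"
        unfolding qf_def C'_def by (simp add: right_diff_distrib left_diff_distrib sum_subtractf mult_ac)
      also have "(\<Sum>a\<in>UNIV. \<Sum>b\<in>UNIV. (x a * c a) * (x b * c b) / C i i) = (\<Sum>a\<in>UNIV. x a * c a)^2 / C i i"
        by (simp only: power2_eq_square sum_product sum_divide_distrib)
      finally show ?thesis .
    qed
    have psd': "qf C' x x \<ge> 0" for x
    proof -
      define s where "s = (\<Sum>a\<in>UNIV. x a * c a)"
      define t where "t = - s / C i i"
      have xs: "(\<Sum>a\<in>UNIV. x a * C a i) = s"
        unfolding s_def c_def by (rule sum.cong[OF refl]) (metis sym)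
      have "0 \<le> qf C (\<lambda>a. x a + t * dl i a) (\<lambda>a. x a + t * dl i a)" by (rule psd)
      also have "\<dots> = qf C x x + t * (2 * s) + t^2 * C i i"
        unfolding qf_add qf_dl_dl qf_dl_right qf_sym[of C "dl i" x, OF sym] xs by (simp add: dl_sum_left)
      also have "\<dots> = qf C x x - s^2 / C i i"
        unfolding t_def using cii by (simp add: field_simps power2_eq_square)
      finally show ?thesis unfolding qfC' s_def by simp
    qed
    let ?K = "{i. \<exists>j. C i j \<noteq> 0}"
    let ?K' = "{i. \<exists>j. C' i j \<noteq> 0}"
    have sub: "?K' \<subseteq> ?K - {i}"
    proof
      fix a assume "a \<in> ?K'"
      then obtain b where b: "C' a b \<noteq> 0" by blast
      have "a \<noteq> i" using b cii unfolding C'_def c_def by auto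
      moreover have "a \<in> ?K"
      proof (rule ccontr)
        assume "a \<notin> ?K"
        then have "C a b = 0" "C i a = 0" using sym[of i a] by auto
        then show False using b unfolding C'_def c_def by simp
      qed
      ultimately show "a \<in> ?K - {i}" by simp
    qed
    have "i \<in> ?K" using ij by blast
    then have "card ?K' < card ?K"
      proof -
      have "?K' \<subset> ?K" using sub \<open>i \<in> ?K\<close> by blast
      then show ?thesis by (intro psubset_card_mono) auto
    qed
    then obtain v' where v'1: "\<forall>a b. C' a b = (\<Sum>k\<in>UNIV. v' k a * v' k b)"
      and v'2: "\<forall>k. (\<forall>j. C' k j = 0) \<longrightarrow> v' k = (\<lambda>_. 0)"
      using less.IH[of "card ?K'" C', OF _ refl sym' psd'] less.prems(1) by blast
    have vi: "v' i = (\<lambda>_. 0)" using v'2 sub by blast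
    define v where "v = v'(i := (\<lambda>a. c a / sqrt (C i i)))"
    show ?thesis
    proof (intro exI[of _ v] conjI allI impI)
      fix a b
      have "(\<Sum>k\<in>UNIV. v k a * v k b) = v i a * v i b + (\<Sum>k\<in>UNIV - {i}. v k a * v k b)"
        by (simp add: sum.remove)
      also have "(\<Sum>k\<in>UNIV - {i}. v k a * v k b) = (\<Sum>k\<in>UNIV - {i}. v' k a * v' k b)"
        unfolding v_def by (rule sum.cong) auto
      also have "\<dots> = (\<Sum>k\<in>UNIV. v' k a * v' k b)"
        using vi by (simp add: sum.remove[of UNIV i])
      also have "v i a * v i b = c a * c b / C i i"
        unfolding v_def using cii by (simp add: field_simps real_sqrt_mult[symmetric])
      finally show "C a b = (\<Sum>k\<in>UNIV. v k a * v k b)"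
        using v'1[rule_format, of a b] unfolding C'_def by simp
    next
      fix k assume k: "\<forall>j. C k j = 0"
      then have "k \<noteq> i" using ij by auto
      moreover have "\<forall>j. C' k j = 0" unfolding C'_def c_def using k sym[of i k] by simp
      ultimately show "v k = (\<lambda>_. 0)" unfolding v_def using v'2 by simp
    qed
  qed
qed

lemma psd_factor:
  fixes C :: "'n::finite \<Rightarrow> 'n \<Rightarrow> real"
  assumes "\<And>i j. C i j = C j i" "\<And>x. qf C x x \<ge> 0"
  shows "\<exists>v::'n \<Rightarrow> 'n \<Rightarrow> real. \<forall>i j. C i j = (\<Sum>k\<in>UNIV. v k i * v k j)"
  using psd_factor_aux[OF refl assms] by blast

lemma meas_nth[measurable]: "(\<lambda>x::real^'n. x$i) \<in> borel_measurable borel"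
  by (intro borel_measurable_continuous_onI linear_continuous_on bounded_linear_vec_nth)

lemma inner_sum_vec: "(w::real^'n) \<bullet> x = (\<Sum>i\<in>UNIV. w$i * x$i)"
  by (simp add: inner_vec_def)

lemma quad_sum_vec: "(w::real^'n) \<bullet> (S *v w) = (\<Sum>i\<in>UNIV. \<Sum>j\<in>UNIV. w$i * w$j * S$i$j)"
  by (simp add: inner_vec_def matrix_vector_mult_def sum_distrib_left mult_ac)

lemma M_S_second:
  fixes mu :: "real^'n" and S :: "real^'n^'n"
  assumes G: "G \<in> M_S mu S"
  shows "integrable G (\<lambda>x. x$i * x$j)" "(\<integral>x. x$i * x$j \<partial>G) = S$i$j + mu$i * mu$j"
proof -
  have ps: "prob_space G" and sG: "sets G = sets borel"
    and int1: "\<And>i. integrable G (\<lambda>x. x $ i)" and int2: "\<And>i. integrable G (\<lambda>x. (x $ i)^2)"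
    and mean: "\<And>i. (\<integral>x. x $ i \<partial>G) = mu $ i"
    and cov: "\<And>i j. (\<integral>x. (x $ i - mu $ i) * (x $ j - mu $ j) \<partial>G) = S $ i $ j"
    using G unfolding M_S_def by auto
  note [measurable_cong] = sG
  interpret prob_space G by fact
  have h1: "integrable G (\<lambda>x. (x$i)^2 + (x$j)^2)" using int2 by auto
  have h2: "(\<lambda>x. x$i * x$j) \<in> borel_measurable G" by measurable
  have h3: "AE x in G. norm (x$i * x$j) \<le> norm ((x$i)^2 + (x$j)^2)"
  proof (intro AE_I2)
    fix x :: "real^'n"
    have "0 \<le> (\<bar>x$i\<bar> - \<bar>x$j\<bar>)^2" by simp
    then have "2 * (\<bar>x$i\<bar> * \<bar>x$j\<bar>) \<le> \<bar>x$i\<bar>^2 + \<bar>x$j\<bar>^2"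
      unfolding power2_diff by linarith
    then have "2 * \<bar>x$i * x$j\<bar> \<le> (x$i)^2 + (x$j)^2"
      by (simp only: abs_mult power2_abs)
    then show "norm (x$i * x$j) \<le> norm ((x$i)^2 + (x$j)^2)" by simp
  qed
  show ii: "integrable G (\<lambda>x. x$i * x$j)"
    by (rule Bochner_Integration.integrable_bound[OF h1 h2 h3])
  have "S$i$j = (\<integral>x. x$i * x$j - mu$i * x$j - mu$j * x$i + mu$i * mu$j \<partial>G)"
    unfolding cov[symmetric] by (rule Bochner_Integration.integral_cong[OF refl]) (simp add: algebra_simps)
  also have "\<dots> = (\<integral>x. x$i * x$j \<partial>G) - mu$i * mu$j"
    using ii int1 mean by (simp add: integral_diff integral_add prob_space)
  finally show "(\<integral>x. x$i * x$j \<partial>G) = S$i$j + mu$i * mu$j" by simp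
qed

lemma part1:
  fixes mu w :: "real^'n" and S :: "real^'n^'n"
  assumes G: "G \<in> M_S mu S" and nn: "0 \<le> w \<bullet> (S *v w)"
  shows "distr G borel (\<lambda>x. w \<bullet> x) \<in> L_S (w \<bullet> mu) (sqrt (w \<bullet> (S *v w)))"
proof -
  have ps: "prob_space G" and sG: "sets G = sets borel" and sym: "sym_dist_vec G"
    and int1: "\<And>i. integrable G (\<lambda>x. x $ i)"
    and mean: "\<And>i. (\<integral>x. x $ i \<partial>G) = mu $ i"
    using G unfolding M_S_def by auto
  note [measurable_cong] = sG
  interpret prob_space G by fact
  have spG: "space G = UNIV" using sets_eq_imp_space_eq[OF sG] by simp
  let ?F = "distr G borel (\<lambda>x. w \<bullet> x)"
  have mw: "(\<lambda>x. w \<bullet> x) \<in> measurable G borel" by measurable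
  have wx: "(\<lambda>x. w \<bullet> x) = (\<lambda>x. \<Sum>i\<in>UNIV. w$i * x$i)" by (simp add: inner_sum_vec)
  have wx2: "(\<lambda>x. (w \<bullet> x)^2) = (\<lambda>x. \<Sum>i\<in>UNIV. \<Sum>j\<in>UNIV. w$i * w$j * (x$i * x$j))"
    by (simp add: inner_sum_vec power2_eq_square sum_product mult_ac)
  have iw: "integrable G (\<lambda>x. w \<bullet> x)" unfolding wx using int1 by auto
  have iw2: "integrable G (\<lambda>x. (w \<bullet> x)^2)" unfolding wx2 using M_S_second(1)[OF G] by auto
  have ew: "(\<integral>x. w \<bullet> x \<partial>G) = w \<bullet> mu"
    unfolding wx using int1 mean by (simp add: inner_sum_vec)
  have ew2: "(\<integral>x. (w \<bullet> x)^2 \<partial>G) = (w \<bullet> mu)^2 + w \<bullet> (S *v w)"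
  proof -
    have "(\<integral>x. (w \<bullet> x)^2 \<partial>G) = (\<Sum>i\<in>UNIV. \<Sum>j\<in>UNIV. w$i * w$j * (S$i$j + mu$i * mu$j))"
      unfolding wx2 using M_S_second[OF G] by simp
    also have "\<dots> = (\<Sum>i\<in>UNIV. \<Sum>j\<in>UNIV. w$i * w$j * S$i$j) + (\<Sum>i\<in>UNIV. \<Sum>j\<in>UNIV. w$i * w$j * (mu$i * mu$j))"
      by (simp add: algebra_simps sum.distrib)
    also have "(\<Sum>i\<in>UNIV. \<Sum>j\<in>UNIV. w$i * w$j * (mu$i * mu$j)) = (w \<bullet> mu)^2"
      by (simp add: inner_sum_vec power2_eq_square sum_product mult_ac)
    finally show ?thesis by (simp add: quad_sum_vec)
  qed
  show ?thesis unfolding L_S_def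
  proof (intro CollectI conjI)
    show "prob_space ?F" by (rule prob_space_distr[OF mw])
    show "sets ?F = sets borel" by simp
    show "integrable ?F (\<lambda>x. x)" using iw by (subst integrable_distr_eq[OF mw]) auto
    show "integrable ?F (\<lambda>x. x^2)" using iw2 by (subst integrable_distr_eq[OF mw]) auto
    show "(\<integral>x. x \<partial>?F) = w \<bullet> mu" using ew by (subst integral_distr[OF mw]) auto
    show "(\<integral>x. x^2 \<partial>?F) = (w \<bullet> mu)^2 + (sqrt (w \<bullet> (S *v w)))^2"
      using ew2 nn by (subst integral_distr[OF mw]) auto
    from sym obtain a where a: "\<And>B. B \<in> sets (borel :: (real ^ 'n) measure) \<Longrightarrow>
        measure G {x. x - a \<in> B} = measure G {x. x - a \<in> uminus ` B}"
      unfolding sym_dist_vec_def by blast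
    show "sym_dist_real ?F" unfolding sym_dist_real_def
    proof (intro exI[of _ "w \<bullet> a"] allI)
      fix r
      let ?B = "{v::real^'n. w \<bullet> v > r}"
      have Bb: "?B \<in> sets borel" by measurable
      have uB: "uminus ` ?B = {v. w \<bullet> v < - r}"
      proof (intro set_eqI iffI)
        fix v assume "v \<in> {v. w \<bullet> v < - r}"
        then have "-v \<in> ?B" "v = - (- v)" by (auto simp: inner_minus_right)
        then show "v \<in> uminus ` ?B" by blast
      qed (auto simp: inner_minus_right)
      have "measure ?F {y. y - w \<bullet> a > r} = measure G {x. x - a \<in> ?B}"
        by (subst measure_distr[OF mw]) (auto simp: spG inner_diff_right)
      also have "\<dots> = measure G {x. x - a \<in> uminus ` ?B}" by (rule a[OF Bb])
      also have "\<dots> = measure ?F {y. y - w \<bullet> a < - r}"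
        unfolding uB by (subst measure_distr[OF mw]) (auto simp: spG inner_diff_right)
      finally show "measure ?F {y. y - w \<bullet> a > r} = measure ?F {y. y - w \<bullet> a < - r}" .
    qed
  qed
qed

lemma refl_sym:
  fixes F :: "real measure"
  assumes ps: "prob_space F" and sF: "sets F = sets borel"
    and sy: "\<And>x. measure F {y. y - b > x} = measure F {y. y - b < - x}"
  shows "distr F borel (\<lambda>y. 2*b - y) = F"
proof -
  interpret prob_space F by fact
  note [measurable_cong] = sF
  have spF: "space F = UNIV" using sets_eq_imp_space_eq[OF sF] by simp
  have mr: "(\<lambda>y. 2*b - y) \<in> measurable F borel" by measurable
  have rd1: "real_distribution (distr F borel (\<lambda>y. 2*b - y))"
    unfolding real_distribution_def real_distribution_axioms_def using prob_space_distr[OF mr] by simp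
  have rd2: "real_distribution F"
    unfolding real_distribution_def real_distribution_axioms_def using ps sF by simp
  show ?thesis
  proof (rule cdf_unique[OF rd1 rd2], rule ext)
    fix x
    have "cdf (distr F borel (\<lambda>y. 2*b - y)) x = measure F {y. y - b \<ge> b - x}"
      unfolding cdf_def2 by (subst measure_distr[OF mr]) (auto simp: spF intro!: arg_cong[where f="measure F"])
    also have "{y. y - b \<ge> b - x} = space F - {y. y - b < b - x}" by (auto simp: spF)
    also have "measure F \<dots> = 1 - measure F {y. y - b < b - x}"
      by (rule prob_compl) (simp add: sF)
    also have "measure F {y. y - b < b - x} = measure F {y. y - b > x - b}"
      using sy[of "x - b"] by simp
    also have "{y. y - b > x - b} = space F - {..x}" by (auto simp: spF)
    also have "1 - measure F \<dots> = measure F {..x}"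
      by (subst prob_compl) (auto simp: sF)
    finally show "cdf (distr F borel (\<lambda>y. 2*b - y)) x = cdf F x" unfolding cdf_def2 .
  qed
qed

abbreviation QU :: "('q::finite) measure" where "QU \<equiv> measure_pmf (pmf_of_set UNIV)"

lemma prodL:
  fixes F :: "real measure" and f :: "'q::finite \<times> real \<Rightarrow> real"
  assumes ps: "prob_space F" and sF: "sets F = sets borel"
    and fi: "\<And>q. integrable F (\<lambda>y. f (q, y))"
  shows "integrable (QU \<Otimes>\<^sub>M F) f" "integral\<^sup>L (QU \<Otimes>\<^sub>M F) f = (\<Sum>q\<in>UNIV. \<integral>y. f (q, y) \<partial>F) / CARD('q)"
proof -
  interpret F: prob_space F by fact
  interpret P: pair_prob_space QU F
    by (simp add: pair_prob_space_def pair_sigma_finite_def F.prob_space_axioms prob_space_measure_pmf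
        prob_space_imp_sigma_finite)
  have "f \<in> borel_measurable (count_space UNIV \<Otimes>\<^sub>M F)"
    by (rule measurable_pair_measure_countable1) (use fi in auto)
  moreover have "sets (QU \<Otimes>\<^sub>M F) = sets (count_space UNIV \<Otimes>\<^sub>M F)"
    by (rule sets_pair_measure_cong) auto
  ultimately have fm: "f \<in> borel_measurable (QU \<Otimes>\<^sub>M F)"
    by (simp cong: measurable_cong_sets)
  show fint: "integrable (QU \<Otimes>\<^sub>M F) f"
    by (rule P.Fubini_integrable[OF fm]) (auto intro!: integrable_measure_pmf_finite fi)
  have "integral\<^sup>L (QU \<Otimes>\<^sub>M F) f = (\<integral>x. (\<integral>y. f (x, y) \<partial>F) \<partial>QU)"
    using P.integral_fst'[OF fint] by simp
  also have "\<dots> = (\<Sum>q\<in>UNIV. \<integral>y. f (q, y) \<partial>F) / CARD('q)"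
    by (subst integral_pmf_of_set) auto
  finally show "integral\<^sup>L (QU \<Otimes>\<^sub>M F) f = (\<Sum>q\<in>UNIV. \<integral>y. f (q, y) \<partial>F) / CARD('q)" .
qed

lemma meas_prod:
  fixes g :: "'q::finite \<times> real \<Rightarrow> 'b"
  assumes "\<And>q. (\<lambda>y. g (q, y)) \<in> measurable F M"
  shows "g \<in> measurable (QU \<Otimes>\<^sub>M F) M"
proof -
  have "g \<in> measurable (count_space UNIV \<Otimes>\<^sub>M F) M"
    by (rule measurable_pair_measure_countable1) (use assms in auto)
  moreover have "sets (QU \<Otimes>\<^sub>M F) = sets (count_space UNIV \<Otimes>\<^sub>M F)"
    by (rule sets_pair_measure_cong) auto
  ultimately show ?thesis by (simp cong: measurable_cong_sets)
qed

lemma prodM: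
  fixes F :: "real measure" and A :: "('q::finite \<times> real) set"
  assumes ps: "prob_space F" and sF: "sets F = sets borel" and A: "A \<in> sets (QU \<Otimes>\<^sub>M F)"
  shows "measure (QU \<Otimes>\<^sub>M F) A = (\<Sum>q\<in>UNIV. measure F {y. (q, y) \<in> A}) / CARD('q)"
proof -
  interpret F: prob_space F by fact
  have spF: "space F = UNIV" using sets_eq_imp_space_eq[OF sF] by simp
  have sp: "space (QU \<Otimes>\<^sub>M F) = UNIV" by (simp add: space_pair_measure spF)
  have sec: "{y. (q, y) \<in> A} \<in> sets F" for q
    using sets_Pair1[OF A, of q] by (simp add: vimage_def)
  have ind: "(\<lambda>y. indicator A (q, y)) = (indicator {y. (q, y) \<in> A} :: real \<Rightarrow> real)" for q
    by (auto simp: indicator_def)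
  have "measure (QU \<Otimes>\<^sub>M F) A = integral\<^sup>L (QU \<Otimes>\<^sub>M F) (indicator A)"
    by (simp add: sp)
  also have "\<dots> = (\<Sum>q\<in>UNIV. \<integral>y. indicator A (q, y) \<partial>F) / CARD('q)"
    by (rule prodL(2)[OF ps sF]) (auto simp: ind less_top[symmetric] intro!: integrable_real_indicator[OF sec])
  also have "\<dots> = (\<Sum>q\<in>UNIV. measure F {y. (q, y) \<in> A}) / CARD('q)"
    by (simp add: ind spF)
  finally show ?thesis .
qed

lemma sum_pair_bool: "(\<Sum>q\<in>(UNIV :: ('n::finite \<times> bool) set). g q) = (\<Sum>k\<in>UNIV. g (k, True) + g (k, False))"
proof -
  have "(\<Sum>q\<in>(UNIV :: ('n \<times> bool) set). g q) = (\<Sum>q\<in>UNIV \<times> UNIV. g q)" by simp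
  also have "\<dots> = (\<Sum>k\<in>UNIV. \<Sum>b\<in>UNIV. g (k, b))" by (simp add: sum.cartesian_product split_beta)
  also have "\<dots> = (\<Sum>k\<in>UNIV. g (k, True) + g (k, False))" by (simp add: UNIV_bool add.commute)
  finally show ?thesis .
qed

lemma Fquad:
  fixes F :: "real measure"
  assumes ps: "prob_space F" and i1: "integrable F (\<lambda>x. x)" and i2: "integrable F (\<lambda>x. x^2)"
    and e1: "(\<integral>x. x \<partial>F) = a" and e2: "(\<integral>x. x^2 \<partial>F) = a^2 + s2"
  shows "integrable F (\<lambda>y. c + d * y + e * y^2)" "(\<integral>y. c + d * y + e * y^2 \<partial>F) = c + d * a + e * (a^2 + s2)"
proof -
  interpret prob_space F by fact
  show "integrable F (\<lambda>y. c + d * y + e * y^2)" using i1 i2 by auto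
  show "(\<integral>y. c + d * y + e * y^2 \<partial>F) = c + d * a + e * (a^2 + s2)"
    using i1 i2 e1 e2 by (simp add: integral_add prob_space)
qed

lemma part2_linalg:
  fixes mu w :: "real^'n" and S :: "real^'n^'n"
  assumes pd: "pos_def_mat S" and w0: "w \<noteq> 0"
  shows "\<exists>v::'n \<Rightarrow> 'n \<Rightarrow> real. (\<forall>i j. S$i$j - (S *v w)$i * (S *v w)$j / (w \<bullet> (S *v w)) = (\<Sum>k\<in>UNIV. v k i * v k j))
     \<and> (\<forall>k. (\<Sum>a\<in>UNIV. w$a * v k a) = 0)"
proof -
  define sg where "sg = w \<bullet> (S *v w)"
  define sw where "sw = S *v w"
  have sg: "sg > 0" using pd w0 unfolding pos_def_mat_def sg_def by auto
  have symS: "S$i$j = S$j$i" for i j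
  proof -
    have "transpose S = S" using pd unfolding pos_def_mat_def by simp
    then have "(transpose S)$j$i = S$j$i" by simp
    then show ?thesis by (simp add: transpose_def)
  qed
  define C0 where "C0 = (\<lambda>i j. S$i$j)"
  define C where "C = (\<lambda>i j. S$i$j - sw$i * sw$j / sg)"
  have symC0: "\<And>i j. C0 i j = C0 j i" unfolding C0_def using symS by simp
  have symC: "\<And>i j. C i j = C j i" unfolding C_def using symS by (simp add: mult.commute)
  have qfS: "qf C0 z z \<ge> 0" for z
  proof -
    define Z where "Z = (\<chi> i. z i)"
    have "qf C0 z z = Z \<bullet> (S *v Z)"
      unfolding qf_def C0_def Z_def by (simp add: quad_sum_vec mult_ac)
    moreover have "Z \<bullet> (S *v Z) \<ge> 0"
      using pd unfolding pos_def_mat_def by (cases "Z = 0") (auto intro: less_imp_le)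
    ultimately show ?thesis by simp
  qed
  let ?w = "\<lambda>i. w$i"
  have qfC0w: "qf C0 x ?w = (\<Sum>a\<in>UNIV. x a * sw$a)" for x
    unfolding qf_def C0_def sw_def matrix_vector_mult_def by (simp add: sum_distrib_left mult_ac)
  have qfC0ww: "qf C0 ?w ?w = sg"
    unfolding qf_def C0_def sg_def by (simp add: quad_sum_vec mult_ac)
  have wsw: "(\<Sum>a\<in>UNIV. w$a * sw$a) = sg" unfolding sg_def sw_def by (simp add: inner_sum_vec)
  have qfC: "qf C x x = qf C0 x x - (\<Sum>a\<in>UNIV. x a * sw$a)^2 / sg" for x
  proof -
    have "qf C x x = qf C0 x x - (\<Sum>a\<in>UNIV. \<Sum>b\<in>UNIV. (x a * sw$a) * (x b * sw$b) / sg)"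
      unfolding qf_def C_def C0_def by (simp add: right_diff_distrib left_diff_distrib sum_subtractf mult_ac)
    also have "(\<Sum>a\<in>UNIV. \<Sum>b\<in>UNIV. (x a * sw$a) * (x b * sw$b) / sg) = (\<Sum>a\<in>UNIV. x a * sw$a)^2 / sg"
      by (simp only: power2_eq_square sum_product sum_divide_distrib)
    finally show ?thesis .
  qed
  have psdC: "qf C x x \<ge> 0" for x
  proof -
    define p where "p = (\<Sum>a\<in>UNIV. x a * sw$a)"
    define t where "t = - p / sg"
    have "0 \<le> qf C0 (\<lambda>a. x a + t * ?w a) (\<lambda>a. x a + t * ?w a)" by (rule qfS)
    also have "\<dots> = qf C0 x x + t * (2 * p) + t^2 * sg"
      unfolding qf_add qf_sym[of C0 ?w x, OF symC0] qfC0w qfC0ww p_def by (simp add: wsw)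
    also have "\<dots> = qf C0 x x - p^2 / sg"
      unfolding t_def using sg by (simp add: field_simps power2_eq_square)
    finally show ?thesis unfolding qfC p_def by simp
  qed
  obtain v :: "'n \<Rightarrow> 'n \<Rightarrow> real" where v: "\<forall>i j. C i j = (\<Sum>k\<in>UNIV. v k i * v k j)"
    using psd_factor[of C, OF symC psdC] by blast
  have "qf C ?w ?w = 0"
  proof -
    have "(\<Sum>a\<in>UNIV. w$a * sw$a) = sg" unfolding sg_def sw_def by (simp add: inner_sum_vec)
    then show ?thesis unfolding qfC qfC0ww using sg by (simp add: power2_eq_square)
  qed
  moreover have "qf C ?w ?w = (\<Sum>k\<in>UNIV. (\<Sum>a\<in>UNIV. w$a * v k a)^2)"
  proof -
    have "qf C ?w ?w = (\<Sum>a\<in>UNIV. \<Sum>b\<in>UNIV. \<Sum>k\<in>UNIV. w$a * v k a * (w$b * v k b))"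
      unfolding qf_def v[rule_format] by (simp add: sum_distrib_left sum_distrib_right mult_ac)
    also have "\<dots> = (\<Sum>a\<in>UNIV. \<Sum>k\<in>UNIV. \<Sum>b\<in>UNIV. w$a * v k a * (w$b * v k b))"
      by (rule sum.cong[OF refl], rule sum.swap)
    also have "\<dots> = (\<Sum>k\<in>UNIV. \<Sum>a\<in>UNIV. \<Sum>b\<in>UNIV. w$a * v k a * (w$b * v k b))"
      by (rule sum.swap)
    also have "\<dots> = (\<Sum>k\<in>UNIV. (\<Sum>a\<in>UNIV. w$a * v k a)^2)"
      by (simp only: power2_eq_square sum_product)
    finally show ?thesis .
  qed
  ultimately have "(\<Sum>k\<in>UNIV. (\<Sum>a\<in>UNIV. w$a * v k a)^2) = 0" by simp
  then have wv: "\<forall>k. (\<Sum>a\<in>UNIV. w$a * v k a) = 0"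
    by (subst (asm) sum_nonneg_eq_0_iff) auto
  show ?thesis
    using v wv unfolding C_def sw_def sg_def by blast
qed

lemma part2:
  fixes mu w :: "real^'n" and S :: "real^'n^'n"
  assumes pd: "pos_def_mat S" and w0: "w \<noteq> 0"
    and FL: "F \<in> L_S (w \<bullet> mu) (sqrt (w \<bullet> (S *v w)))"
  shows "\<exists>G\<in>M_S mu S. F = distr G borel (\<lambda>x. w \<bullet> x)"
proof -
  define a where "a = w \<bullet> mu"
  define sg where "sg = w \<bullet> (S *v w)"
  define sw where "sw = S *v w"
  have sg: "sg > 0" using pd w0 unfolding pos_def_mat_def sg_def by auto
  obtain v :: "'n \<Rightarrow> 'n \<Rightarrow> real" where
    v: "\<And>i j. S$i$j - sw$i * sw$j / sg = (\<Sum>k\<in>UNIV. v k i * v k j)"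
    and wv: "\<And>k. (\<Sum>a\<in>UNIV. w$a * v k a) = 0"
    using part2_linalg[OF pd w0] unfolding sw_def sg_def by blast
  have ps: "prob_space F" and sF: "sets F = sets borel" and symF: "sym_dist_real F"
    and i1: "integrable F (\<lambda>x. x)" and i2: "integrable F (\<lambda>x. x^2)"
    and e1: "(\<integral>x. x \<partial>F) = a" and e2: "(\<integral>x. x^2 \<partial>F) = a^2 + sg"
    using FL sg unfolding L_S_def a_def sg_def by auto
  interpret F: prob_space F by fact
  note [measurable_cong] = sF
  have spF: "space F = UNIV" using sets_eq_imp_space_eq[OF sF] by simp
  note FQ = Fquad[OF ps i1 i2 e1 e2]
  define N where "N = real CARD('n)"
  have N: "N > 0" unfolding N_def by simp
  define Z :: "'n \<times> bool \<Rightarrow> real^'n" where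
    "Z = (\<lambda>(k, \<beta>). ((if \<beta> then 1 else -1) * sqrt N) *\<^sub>R (\<chi> i. v k i))"
  define u where "u = (1 / sg) *\<^sub>R sw"
  define \<phi> where "\<phi> = (\<lambda>(q :: 'n \<times> bool, y :: real). mu + (y - a) *\<^sub>R u + Z q)"
  define P where "P = (QU \<Otimes>\<^sub>M F :: (('n \<times> bool) \<times> real) measure)"
  define G where "G = distr P borel \<phi>"
  have cardQ: "real CARD('n \<times> bool) = 2 * N" unfolding N_def by simp
  have mphi: "\<phi> \<in> measurable P borel"
    unfolding P_def by (rule meas_prod) (simp add: \<phi>_def)
  have sp: "space P = UNIV" by (simp add: P_def space_pair_measure spF)
  interpret P: prob_space P unfolding P_def
    by (intro prob_space_pair ps prob_space_measure_pmf)
  have sG: "sets G = sets borel" unfolding G_def by simp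
  have psG: "prob_space G" unfolding G_def by (rule P.prob_space_distr[OF mphi])
  have Zsum: "(\<Sum>q\<in>UNIV. Z q $ i) = 0" for i
    by (simp add: sum_pair_bool Z_def)
  have ZZ: "(\<Sum>q\<in>UNIV. Z q $ i * Z q $ j) = 2 * N * (\<Sum>k\<in>UNIV. v k i * v k j)" for i j
  proof -
    have sq: "sqrt N * (sqrt N * X) = N * X" for X
      using N by (simp add: mult.assoc[symmetric])
    show ?thesis by (simp add: sum_pair_bool Z_def sum_distrib_left mult_ac sq)
  qed
  have wZ: "w \<bullet> Z q = 0" for q
  proof -
    have "w \<bullet> (\<chi> i. v k i) = 0" for k using wv[of k] by (simp add: inner_sum_vec)
    then show ?thesis by (auto simp: Z_def split: prod.splits)
  qed
  have wu: "w \<bullet> u = 1"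
    using sg unfolding u_def sg_def sw_def by (simp add: inner_commute)
  have wphi: "w \<bullet> \<phi> p = snd p" for p
    by (cases p) (simp add: \<phi>_def inner_add_right inner_diff_right wZ wu a_def algebra_simps)
  have intG: "integrable G h \<longleftrightarrow> integrable P (\<lambda>p. h (\<phi> p))" if [measurable]: "h \<in> borel_measurable borel" for h :: "real^'n \<Rightarrow> real"
    unfolding G_def by (rule integrable_distr_eq[OF mphi]) simp
  have intgG: "integral\<^sup>L G h = integral\<^sup>L P (\<lambda>p. h (\<phi> p))" if [measurable]: "h \<in> borel_measurable borel" for h :: "real^'n \<Rightarrow> real"
    unfolding G_def by (rule integral_distr[OF mphi]) simp
  have quadP: "integrable P (\<lambda>p. h (\<phi> p)) \<and> integral\<^sup>L P (\<lambda>p. h (\<phi> p)) = (\<Sum>q\<in>UNIV. c q + d q * a + e q * (a^2 + sg)) / (2 * N)"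
    if hq: "\<And>q y. h (\<phi> (q, y)) = c q + d q * y + e q * y^2" for h c d e
  proof -
    have fi: "integrable F (\<lambda>y. h (\<phi> (q, y)))" for q unfolding hq by (rule FQ(1))
    have "integral\<^sup>L P (\<lambda>p. h (\<phi> p)) = (\<Sum>q\<in>UNIV. \<integral>y. h (\<phi> (q, y)) \<partial>F) / CARD('n \<times> bool)"
      unfolding P_def by (rule prodL(2)[OF ps sF fi])
    also have "\<dots> = (\<Sum>q\<in>UNIV. c q + d q * a + e q * (a^2 + sg)) / (2 * N)"
      unfolding hq FQ(2) cardQ by simp
    finally show ?thesis using prodL(1)[OF ps sF fi] unfolding P_def by simp
  qed
  have phin: "\<phi> (q, y) $ i = mu$i + (y - a) * u$i + Z q $ i" for q y i
    by (simp add: \<phi>_def)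
  have sumc: "(\<Sum>q\<in>(UNIV :: ('n \<times> bool) set). c) = 2 * N * c" for c :: real
    using cardQ by simp
  have GM1: "integrable G (\<lambda>x. x$i) \<and> (\<integral>x. x$i \<partial>G) = mu$i" for i
  proof -
    have "integrable P (\<lambda>p. \<phi> p $ i) \<and> integral\<^sup>L P (\<lambda>p. \<phi> p $ i) =
      (\<Sum>q\<in>UNIV. (mu$i - a * u$i + Z q $ i) + u$i * a + 0 * (a^2 + sg)) / (2 * N)"
      by (rule quadP) (simp add: phin algebra_simps)
    moreover have "(\<Sum>q\<in>UNIV. (mu$i - a * u$i + Z q $ i) + u$i * a + 0 * (a^2 + sg)) = 2 * N * mu$i"
      by (simp add: sum.distrib Zsum sumc N_def)
    ultimately show ?thesis using N by (simp add: intG intgG)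
  qed
  have GM2: "integrable G (\<lambda>x. (x$i)^2)" for i
  proof -
    have "integrable P (\<lambda>p. (\<phi> p $ i)^2) \<and> integral\<^sup>L P (\<lambda>p. (\<phi> p $ i)^2) =
      (\<Sum>q\<in>UNIV. (mu$i - a * u$i + Z q $ i)^2 + (2 * (mu$i - a * u$i + Z q $ i) * u$i) * a + (u$i)^2 * (a^2 + sg)) / (2 * N)"
      by (rule quadP) (simp add: phin algebra_simps power2_eq_square)
    then show ?thesis by (simp add: intG)
  qed
  have GM3: "(\<integral>x. (x$i - mu$i) * (x$j - mu$j) \<partial>G) = S$i$j" for i j
  proof -
    have "integrable P (\<lambda>p. (\<phi> p $ i - mu$i) * (\<phi> p $ j - mu$j)) \<and> integral\<^sup>L P (\<lambda>p. (\<phi> p $ i - mu$i) * (\<phi> p $ j - mu$j)) =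
      (\<Sum>q\<in>UNIV. (Z q $ i - a * u$i) * (Z q $ j - a * u$j) + (u$i * (Z q $ j - a * u$j) + u$j * (Z q $ i - a * u$i)) * a
         + (u$i * u$j) * (a^2 + sg)) / (2 * N)"
      by (rule quadP) (simp add: phin algebra_simps power2_eq_square)
    moreover have "(\<Sum>q\<in>UNIV. (Z q $ i - a * u$i) * (Z q $ j - a * u$j) + (u$i * (Z q $ j - a * u$j) + u$j * (Z q $ i - a * u$i)) * a
         + (u$i * u$j) * (a^2 + sg)) = (\<Sum>q\<in>UNIV. Z q $ i * Z q $ j + u$i * u$j * sg)"
      by (rule sum.cong) (auto simp: algebra_simps power2_eq_square)
    moreover have "(\<Sum>q\<in>UNIV. Z q $ i * Z q $ j + u$i * u$j * sg) = 2 * N * S$i$j"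
    proof -
      have "u$i * u$j * sg = sw$i * sw$j / sg" unfolding u_def using sg by (simp add: power2_eq_square)
      then show ?thesis by (simp add: sum.distrib ZZ sumc v[symmetric] algebra_simps N_def)
    qed
    ultimately show ?thesis using N by (simp add: intgG)
  qed
  have GMsym: "sym_dist_vec G"
  proof -
    from symF obtain b where b: "\<And>x. measure F {y. y - b > x} = measure F {y. y - b < - x}"
      unfolding sym_dist_real_def by blast
    have RF: "distr F borel (\<lambda>y. 2*b - y) = F" by (rule refl_sym[OF ps sF b])
    define c where "c = mu + (b - a) *\<^sub>R u"
    define g where "g = (\<lambda>q B. measure F {y. (y - b) *\<^sub>R u + Z q \<in> B})"
    define flip :: "'n \<times> bool \<Rightarrow> 'n \<times> bool" where "flip = (\<lambda>(k, \<beta>). (k, \<not> \<beta>))"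
    have Zflip: "Z (flip q) = - Z q" for q by (cases q) (simp add: Z_def flip_def)
    have flipflip: "flip (flip q) = q" for q by (cases q) (simp add: flip_def)
    have Gmeas: "measure G {x. x - c \<in> B} = (\<Sum>q\<in>UNIV. g q B) / (2 * N)"
      if B: "B \<in> sets borel" for B
    proof -
      have mc: "(\<lambda>x. x - c) \<in> measurable (borel :: (real^'n) measure) borel" by measurable
      have Bs: "{x. x - c \<in> B} \<in> sets borel"
        using measurable_sets_borel[OF mc B] by (simp add: vimage_def)
      have "measure G {x. x - c \<in> B} = measure P (\<phi> -` {x. x - c \<in> B} \<inter> space P)"
        unfolding G_def by (rule measure_distr[OF mphi Bs])
      also have "\<dots> = (\<Sum>q\<in>UNIV. measure F {y. (q, y) \<in> \<phi> -` {x. x - c \<in> B} \<inter> space P}) / CARD('n \<times> bool)"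
        unfolding P_def by (rule prodM[OF ps sF]) (use measurable_sets[OF mphi Bs] P_def in simp)
      also have "\<dots> = (\<Sum>q\<in>UNIV. g q B) / (2 * N)"
        unfolding cardQ g_def
        by (intro arg_cong2[where f="(/)"] sum.cong refl arg_cong[where f="measure F"])
           (auto simp: sp \<phi>_def c_def algebra_simps)
      finally show ?thesis .
    qed
    show ?thesis unfolding sym_dist_vec_def
    proof (intro exI[of _ c] ballI)
      fix B :: "(real^'n) set" assume B: "B \<in> sets borel"
      have um: "uminus ` B = {x. - x \<in> B}"
        by (auto simp: image_iff intro: exI[of _ "- _"]) (metis minus_minus)
      have muB: "uminus ` B \<in> sets borel"
      proof -
        have "(\<lambda>x::real^'n. - x) \<in> measurable borel borel" by measurable
        from measurable_sets_borel[OF this B] show ?thesis unfolding um by (simp add: vimage_def)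
      qed
      have gq: "g q (uminus ` B) = g (flip q) B" for q
      proof -
        have mr: "(\<lambda>y. 2*b - y) \<in> measurable F borel" by measurable
        have ms: "{y. (y - b) *\<^sub>R u + Z q \<in> uminus ` B} \<in> sets borel"
        proof -
          have "(\<lambda>y. (y - b) *\<^sub>R u + Z q) \<in> measurable borel borel" by measurable
          from measurable_sets_borel[OF this muB] show ?thesis by (simp add: vimage_def)
        qed
        have e: "- (((2*b - y) - b) *\<^sub>R u + Z q) = (y - b) *\<^sub>R u + - Z q" for y
        proof -
          have "(2*b - y) - b = -(y - b)" by simp
          then show ?thesis by (simp only: scaleR_minus_left minus_add_distrib minus_minus)
        qed
        have st: "(\<lambda>y. 2*b - y) -` {y. (y - b) *\<^sub>R u + Z q \<in> uminus ` B} \<inter> space F = {y. (y - b) *\<^sub>R u + Z (flip q) \<in> B}"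
          by (simp only: spF Int_UNIV_right vimage_def mem_Collect_eq um e Zflip)
        have "g q (uminus ` B) = measure (distr F borel (\<lambda>y. 2*b - y)) {y. (y - b) *\<^sub>R u + Z q \<in> uminus ` B}"
          unfolding g_def RF ..
        also have "\<dots> = measure F ((\<lambda>y. 2*b - y) -` {y. (y - b) *\<^sub>R u + Z q \<in> uminus ` B} \<inter> space F)"
          by (rule measure_distr[OF mr ms])
        also have "\<dots> = g (flip q) B"
          unfolding st g_def ..
        finally show ?thesis .
      qed
      have "(\<Sum>q\<in>UNIV. g q (uminus ` B)) = (\<Sum>q\<in>UNIV. g (flip q) B)" by (simp add: gq)
      also have "\<dots> = (\<Sum>q\<in>UNIV. g q B)"
        by (rule sum.reindex_bij_witness[of _ flip flip]) (auto simp: flipflip)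
      finally show "measure G {x. x - c \<in> B} = measure G {x. x - c \<in> uminus ` B}"
        using Gmeas[OF B] Gmeas[OF muB] by simp
    qed
  qed
  have GM: "G \<in> M_S mu S"
    unfolding M_S_def using psG sG GMsym GM1 GM2 GM3 by blast
  have GF: "F = distr G borel (\<lambda>x. w \<bullet> x)"
  proof -
    have mw: "(\<lambda>x. w \<bullet> x) \<in> measurable (borel :: (real^'n) measure) borel" by measurable
    have "distr G borel (\<lambda>x. w \<bullet> x) = distr P borel ((\<lambda>x. w \<bullet> x) \<circ> \<phi>)"
      unfolding G_def by (rule distr_distr[OF mw mphi])
    also have "(\<lambda>x. w \<bullet> x) \<circ> \<phi> = snd" by (simp add: fun_eq_iff wphi)
    also have "distr P borel snd = F"
    proof (rule measure_eqI)
      show "sets (distr P borel snd) = sets F" by (simp add: sF)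
      fix A assume "A \<in> sets (distr P borel snd)"
      then have A: "A \<in> sets F" by (simp add: sF)
      have ms: "snd \<in> measurable P borel" unfolding P_def by (rule meas_prod) simp
      have "emeasure (distr P borel snd) A = emeasure P (snd -` A \<inter> space P)"
        using A by (subst emeasure_distr[OF ms]) (auto simp: sF)
      also have "snd -` A \<inter> space P = UNIV \<times> A" by (auto simp: sp)
      also have "emeasure P (UNIV \<times> A) = emeasure QU UNIV * emeasure F A"
        unfolding P_def using F.emeasure_pair_measure_Times[of UNIV QU A] A by simp
      finally show "emeasure (distr P borel snd) A = emeasure F A" by simp
    qed
    finally show ?thesis ..
  qed
  show ?thesis using GM GF by blast
qed

theorem lemma4:
  fixes mu w :: "real ^ 'n" and S :: "real ^ 'n ^ 'n" and t :: real
  assumes "pos_def_mat S" and "w \<noteq> 0"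
  shows "L_wS w mu S = L_S (w \<bullet> mu) (sqrt (w \<bullet> (S *v w)))
    \<and> (SUP G \<in> M_S mu S. \<integral>x. (pos_part (w \<bullet> x - t)) ^ 2 \<partial>G)
      = (SUP F \<in> L_S (w \<bullet> mu) (sqrt (w \<bullet> (S *v w))). \<integral>x. (pos_part (x - t)) ^ 2 \<partial>F)"
proof -
  have nn: "0 \<le> w \<bullet> (S *v w)" using assms unfolding pos_def_mat_def by (auto intro: less_imp_le)
  have eq: "L_wS w mu S = L_S (w \<bullet> mu) (sqrt (w \<bullet> (S *v w)))"
  proof
    show "L_wS w mu S \<subseteq> L_S (w \<bullet> mu) (sqrt (w \<bullet> (S *v w)))"
      unfolding L_wS_def using part1[OF _ nn] by blast
    show "L_S (w \<bullet> mu) (sqrt (w \<bullet> (S *v w))) \<subseteq> L_wS w mu S"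
    proof
      fix F assume "F \<in> L_S (w \<bullet> mu) (sqrt (w \<bullet> (S *v w)))"
      from part2[OF assms this] obtain G where "G \<in> M_S mu S" "F = distr G borel (\<lambda>x. w \<bullet> x)" by blast
      then show "F \<in> L_wS w mu S" unfolding L_wS_def by blast
    qed
  qed
  have pm[measurable]: "pos_part \<in> borel_measurable borel" unfolding pos_part_def by measurable
  have "(SUP G \<in> M_S mu S. \<integral>x. (pos_part (w \<bullet> x - t)) ^ 2 \<partial>G)
      = (SUP G \<in> M_S mu S. \<integral>x. (pos_part (x - t)) ^ 2 \<partial>(distr G borel (\<lambda>x. w \<bullet> x)))"
  proof (rule SUP_cong[OF refl])
    fix G assume "G \<in> M_S mu S"
    then have sG: "sets G = sets borel" unfolding M_S_def by auto
    note [measurable_cong] = sG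
    have mw: "(\<lambda>x. w \<bullet> x) \<in> measurable G borel" by measurable
    show "(\<integral>x. (pos_part (w \<bullet> x - t)) ^ 2 \<partial>G) = (\<integral>x. (pos_part (x - t)) ^ 2 \<partial>(distr G borel (\<lambda>x. w \<bullet> x)))"
      by (subst integral_distr[OF mw]) auto
  qed
  also have "\<dots> = (SUP F \<in> L_wS w mu S. \<integral>x. (pos_part (x - t)) ^ 2 \<partial>F)"
    unfolding L_wS_def by (simp add: image_image)
  finally show ?thesis using eq by simp
qed

end
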